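(* Let $f_1,\dots,f_n:\mathbb{R}^d\to\mathbb{R}$ be such that each $f_i$ is $L_i$-smooth and $f_i^*=\min_xf_i(x)$ exists; let $x_i$ be a stationary point of $f_i$. Let $\alpha_i\in(0,1)$, $T_i(x)=\alpha_ix+(1-\alpha_i)x_i$, $\tilde f(x)=\frac1n\sum_if_i(T_i(x))$, $L_\alpha=\frac1n\sum_i\alpha_i^2L_i$ and $f^*=\frac1n\sum_if_i^*$. Let $\omega_i\ge0$ and consider distributed compressed gradient descent on $\tilde f$: $x^{t+1}=x^t-\gamma\frac1n\sum_{i=1}^n\mathcal{C}_i^t(\alpha_i\nabla f_i(T_i(x^t)))$, with $\mathcal{C}_i^t\in\mathbb{B}^d(\omega_i)$ drawn independently across $i,t$. If $0<\gamma\leq\frac{1}{L_\alpha}$, then for all $k\geq1$ \[\min_{0\leq t\leq k-1}\mathbb{E}\|\nabla\tilde f(x^t)\|^2\leq\frac{2\left(1+\frac{2L_\alpha\gamma^2\max_i\{L_i\omega_i\alpha_i^2\}}{n}\right)^k}{\gamma k}(\tilde f(x^0)-f^* ).\]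
   Context: A (random) operator $\mathcal{C}$ belongs to $\mathbb{B}^d(\omega)$ if $\mathbb{E}[\mathcal{C}(x)] = x$ and $\mathbb{E}\|\mathcal{C}(x)-x\|^2\leq\omega\|x\|^2$ for all $x$. A differentiable $g$ is $L$-smooth if $\|\nabla g(x)-\nabla g(y)\|\leq L\|x-y\|$ for all $x,y$. No convexity is assumed. *)

theory Defs
  imports "HOL-Analysis.Analysis" "HOL-Probability.Probability"
begin

definition L_smooth :: "real \<Rightarrow> ('v::real_inner \<Rightarrow> real) \<Rightarrow> ('v \<Rightarrow> 'v) \<Rightarrow> bool" where
  "L_smooth L f g \<longleftrightarrow> (\<forall>x. GDERIV f x :> g x) \<and> (\<forall>x y. norm (g x - g y) \<le> L * norm (x - y))"

text \<open>A random operator C (C w x = value of the operator drawn at outcome w, applied to x)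
  on the probability space M belongs to the class B(omega).\<close>
definition in_B :: "'a measure \<Rightarrow> ('a \<Rightarrow> 'v::euclidean_space \<Rightarrow> 'v) \<Rightarrow> real \<Rightarrow> bool" where
  "in_B M C om \<longleftrightarrow> (\<forall>x. integrable M (\<lambda>w. C w x) \<and> (\<integral>w. C w x \<partial>M) = x \<and>
      (\<integral>\<^sup>+ w. ennreal ((norm (C w x - x))\<^sup>2) \<partial>M) \<le> ennreal (om * (norm x)\<^sup>2))"

end

theory Submission
  imports Defs
begin


lemma L_smooth_nonneg:
  fixes f :: "real^'d \<Rightarrow> real"
  assumes "L_smooth L f g" shows "0 \<le> L"
proof -
  obtain i :: 'd where True by simp
  have "norm (g (axis i 1) - g 0) \<le> L * norm (axis i (1::real) - 0)"
    using assms unfolding L_smooth_def by blast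
  moreover have "norm (axis i (1::real) - 0) = 1" by simp
  ultimately show ?thesis by (metis mult.right_neutral norm_ge_zero order_trans)
qed

lemma L_smooth_descent:
  fixes f :: "'v::real_inner \<Rightarrow> real"
  assumes sm: "L_smooth L f g"
  shows "f y \<le> f x + g x \<bullet> (y - x) + L / 2 * (norm (y - x))\<^sup>2"
proof -
  define h where "h = y - x"
  define \<phi> where "\<phi> s = f (x + s *\<^sub>R h) - s * (g x \<bullet> h) - L / 2 * s\<^sup>2 * (norm h)\<^sup>2" for s
  have der: "DERIV \<phi> s :> (g (x + s *\<^sub>R h) \<bullet> h - g x \<bullet> h - L * s * (norm h)\<^sup>2)" for s
  proof -
    have gd: "GDERIV f (x + s *\<^sub>R h) :> g (x + s *\<^sub>R h)" using sm unfolding L_smooth_def by blast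
    have "((\<lambda>s. x + s *\<^sub>R h) has_derivative (\<lambda>u. u *\<^sub>R h)) (at s)"
      by (auto intro!: derivative_eq_intros)
    from has_derivative_compose[OF this gd[unfolded gderiv_def]]
    have "((\<lambda>s. f (x + s *\<^sub>R h)) has_derivative (\<lambda>u. (u *\<^sub>R h) \<bullet> g (x + s *\<^sub>R h))) (at s)" by simp
    hence d1: "((\<lambda>s. f (x + s *\<^sub>R h)) has_real_derivative (g (x + s *\<^sub>R h) \<bullet> h)) (at s)"
      unfolding has_field_derivative_def by (rule has_derivative_eq_rhs) (auto simp: fun_eq_iff inner_commute)
    show ?thesis unfolding \<phi>_def
      by (rule derivative_eq_intros d1 refl)+ (simp add: power2_eq_square algebra_simps)
  qed
  have "\<phi> 1 \<le> \<phi> 0"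
  proof (rule DERIV_nonpos_imp_nonincreasing[of 0 1])
    fix s :: real assume s: "0 \<le> s" "s \<le> 1"
    have "g (x + s *\<^sub>R h) \<bullet> h - g x \<bullet> h = (g (x + s *\<^sub>R h) - g x) \<bullet> h" by (simp add: inner_diff_left)
    also have "\<dots> \<le> norm (g (x + s *\<^sub>R h) - g x) * norm h" by (rule norm_cauchy_schwarz)
    also have "\<dots> \<le> (L * norm (s *\<^sub>R h)) * norm h"
    proof (rule mult_right_mono)
      show "norm (g (x + s *\<^sub>R h) - g x) \<le> L * norm (s *\<^sub>R h)"
        using sm unfolding L_smooth_def by (metis add_diff_cancel_left')
    qed simp
    also have "\<dots> = L * s * (norm h)\<^sup>2" using s by (simp add: power2_eq_square)
    finally have "g (x + s *\<^sub>R h) \<bullet> h - g x \<bullet> h - L * s * (norm h)\<^sup>2 \<le> 0" by simp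
    thus "\<exists>y. DERIV \<phi> s :> y \<and> y \<le> 0" using der by blast
  qed simp
  thus ?thesis unfolding \<phi>_def h_def by simp
qed

lemma L_smooth_grad_bound:
  fixes f :: "'v::real_inner \<Rightarrow> real"
  assumes sm: "L_smooth L f g" and lb: "\<forall>y. fs \<le> f y" and L0: "0 \<le> L"
  shows "(norm (g x))\<^sup>2 \<le> 2 * L * (f x - fs)"
proof -
  have key: "fs \<le> f x - t * (norm (g x))\<^sup>2 + L / 2 * t\<^sup>2 * (norm (g x))\<^sup>2" for t
  proof -
    have "fs \<le> f (x - t *\<^sub>R g x)" using lb by blast
    also have "\<dots> \<le> f x + g x \<bullet> ((x - t *\<^sub>R g x) - x) + L / 2 * (norm ((x - t *\<^sub>R g x) - x))\<^sup>2"
      by (rule L_smooth_descent[OF sm])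
    also have "\<dots> = f x - t * (norm (g x))\<^sup>2 + L / 2 * t\<^sup>2 * (norm (g x))\<^sup>2"
      by (simp add: power2_norm_eq_inner power_mult_distrib)
    finally show ?thesis .
  qed
  show ?thesis
  proof (cases "L > 0")
    case True
    have "fs \<le> f x - (1/L) * (norm (g x))\<^sup>2 + L / 2 * (1/L)\<^sup>2 * (norm (g x))\<^sup>2" by (rule key)
    also have "\<dots> = f x - (norm (g x))\<^sup>2 / (2 * L)" using True by (simp add: field_simps power2_eq_square)
    finally show ?thesis using True by (simp add: field_simps)
  next
    case False
    show ?thesis
    proof (rule ccontr)
      assume nc: "\<not> ?thesis"
      hence pos: "(norm (g x))\<^sup>2 > 0" using False L0 by auto
      define t where "t = (f x - fs + 1) / (norm (g x))\<^sup>2 + 1"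
      have "fs \<le> f x - t * (norm (g x))\<^sup>2 + L / 2 * t\<^sup>2 * (norm (g x))\<^sup>2" by (rule key)
      moreover have "L / 2 * t\<^sup>2 * (norm (g x))\<^sup>2 \<le> 0" using False
        by (intro mult_nonpos_nonneg) auto
      moreover have "t * (norm (g x))\<^sup>2 = f x - fs + 1 + (norm (g x))\<^sup>2" using pos
        unfolding t_def by (simp add: field_simps)
      ultimately show False using pos by linarith
    qed
  qed
qed



locale setting =
  fixes n :: nat
    and f :: "nat \<Rightarrow> real ^ 'd \<Rightarrow> real"
    and g :: "nat \<Rightarrow> real ^ 'd \<Rightarrow> real ^ 'd"
    and L :: "nat \<Rightarrow> real"
    and fs :: "nat \<Rightarrow> real"
    and xs :: "nat \<Rightarrow> real ^ 'd"
    and \<alpha> :: "nat \<Rightarrow> real"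
    and om :: "nat \<Rightarrow> real"
    and Gt :: "real ^ 'd \<Rightarrow> real ^ 'd"
    and M :: "'a measure"
    and S :: "'s measure"
    and \<xi> :: "nat \<Rightarrow> nat \<Rightarrow> 'a \<Rightarrow> 's"
    and Q :: "nat \<Rightarrow> nat \<Rightarrow> 's \<Rightarrow> real ^ 'd \<Rightarrow> real ^ 'd"
    and X :: "nat \<Rightarrow> 'a \<Rightarrow> real ^ 'd"
    and x0 :: "real ^ 'd"
    and \<gamma> :: real
  assumes n: "n \<ge> 1"
    and smooth: "\<forall>i<n. L_smooth (L i) (f i) (g i)"
    and fmin: "\<forall>i<n. (\<exists>z. f i z = fs i) \<and> (\<forall>y. fs i \<le> f i y)"
    and stat: "\<forall>i<n. g i (xs i) = 0"
    and alpha: "\<forall>i<n. 0 < \<alpha> i \<and> \<alpha> i < 1"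
    and om: "\<forall>i<n. om i \<ge> 0"
    and Gt: "\<forall>x. GDERIV (\<lambda>y. (1 / real n) * (\<Sum>i<n. f i (\<alpha> i *\<^sub>R y + (1 - \<alpha> i) *\<^sub>R xs i))) x :> Gt x"
    and M: "prob_space M"
    and indep: "prob_space.indep_vars M (\<lambda>_. S) (\<lambda>(i, t). \<xi> i t) ({..<n} \<times> UNIV)"
    and Qmeas: "\<forall>i<n. \<forall>t. (\<lambda>(s, x). Q i t s x) \<in> borel_measurable (S \<Otimes>\<^sub>M borel)"
    and QB: "\<forall>i<n. \<forall>t. in_B M (\<lambda>w. Q i t (\<xi> i t w)) (om i)"
    and X0: "\<forall>w. X 0 w = x0"
    and Xstep: "\<forall>t w. X (Suc t) w = X t w - \<gamma> *\<^sub>R ((1 / real n) *\<^sub>R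
        (\<Sum>i<n. Q i t (\<xi> i t w) (\<alpha> i *\<^sub>R g i (\<alpha> i *\<^sub>R X t w + (1 - \<alpha> i) *\<^sub>R xs i))))"
    and gamma: "0 < \<gamma>" "\<gamma> * ((1 / real n) * (\<Sum>i<n. (\<alpha> i)\<^sup>2 * L i)) \<le> 1"
begin

sublocale prob_space M by (rule M)

definition "T i x = \<alpha> i *\<^sub>R x + (1 - \<alpha> i) *\<^sub>R xs i"
definition "ft x = (1 / real n) * (\<Sum>i<n. f i (T i x))"
definition "fstar = (1 / real n) * (\<Sum>i<n. fs i)"
definition "del x = ft x - fstar"
definition "v i x = \<alpha> i *\<^sub>R g i (T i x)"
definition "La = (1 / real n) * (\<Sum>i<n. (\<alpha> i)\<^sup>2 * L i)"
definition "mx = Max ((\<lambda>i. L i * om i * (\<alpha> i)\<^sup>2) ` {..<n})"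
definition "b = La * \<gamma>\<^sup>2 * mx / real n"

lemma npos: "real n > 0" using n by simp

lemma L_nonneg: "i < n \<Longrightarrow> 0 \<le> L i"
  using smooth L_smooth_nonneg by blast

lemma La_nonneg: "0 \<le> La"
  unfolding La_def using L_nonneg by (auto intro!: sum_nonneg divide_nonneg_nonneg)

lemma mx_ge: "i < n \<Longrightarrow> L i * om i * (\<alpha> i)\<^sup>2 \<le> mx"
  unfolding mx_def by (rule Max_ge) auto

lemma mx_nonneg: "0 \<le> mx"
proof -
  have "0 \<le> L 0 * om 0 * (\<alpha> 0)\<^sup>2" using L_nonneg[of 0] om n by auto
  also have "\<dots> \<le> mx" using mx_ge[of 0] n by auto
  finally show ?thesis .
qed

lemma b_nonneg: "0 \<le> b"
  unfolding b_def using La_nonneg mx_nonneg by auto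

lemma La_gamma: "La * \<gamma> \<le> 1" using gamma unfolding La_def by (simp add: mult.commute)

lemma g_cont: "i < n \<Longrightarrow> continuous_on UNIV (g i)"
proof -
  assume i: "i < n"
  have "(L i)-lipschitz_on UNIV (g i)"
    using smooth i L_nonneg[OF i] unfolding L_smooth_def by (intro lipschitz_onI) (auto simp: dist_norm)
  thus ?thesis by (rule lipschitz_on_continuous_on)
qed

lemma f_cont: "i < n \<Longrightarrow> continuous_on UNIV (f i)"
proof -
  assume i: "i < n"
  have "\<forall>x. isCont (f i) x"
    using smooth i unfolding L_smooth_def gderiv_def by (metis has_derivative_continuous)
  thus ?thesis by (simp add: continuous_at_imp_continuous_on)
qed

lemma T_cont: "continuous_on UNIV (T i)"
  unfolding T_def by (intro continuous_intros)

lemma v_cont: "i < n \<Longrightarrow> continuous_on UNIV (v i)"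
  unfolding v_def using g_cont T_cont
  by (intro continuous_intros continuous_on_compose2[of UNIV "g i" UNIV "T i"]) auto

lemma ft_cont: "continuous_on UNIV ft"
  unfolding ft_def using f_cont T_cont
  by (intro continuous_intros continuous_on_compose2[of UNIV "f i" UNIV "T i" for i]) auto

lemma ft_deriv: "((\<lambda>y. (1 / real n) * (\<Sum>i<n. f i (T i y))) has_derivative (\<lambda>h. h \<bullet> ((1 / real n) *\<^sub>R (\<Sum>i<n. v i x)))) (at x)"
proof -
  have d: "((\<lambda>y. f i (T i y)) has_derivative (\<lambda>h. h \<bullet> v i x)) (at x)" if i: "i < n" for i
  proof -
    have dT: "(T i has_derivative (\<lambda>h. \<alpha> i *\<^sub>R h)) (at x)"
      unfolding T_def by (auto intro!: derivative_eq_intros)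
    have "(f i has_derivative (\<lambda>h. h \<bullet> g i (T i x))) (at (T i x))"
      using smooth i unfolding L_smooth_def gderiv_def by blast
    from has_derivative_compose[OF dT this]
    show ?thesis by (rule has_derivative_eq_rhs) (auto simp: v_def fun_eq_iff)
  qed
  have "((\<lambda>y. \<Sum>i<n. f i (T i y)) has_derivative (\<lambda>h. \<Sum>i<n. h \<bullet> v i x)) (at x)"
    by (rule has_derivative_sum) (use d in auto)
  from has_derivative_mult_right[OF this, of "1 / real n"]
  show ?thesis by (rule has_derivative_eq_rhs) (auto simp: fun_eq_iff inner_sum_right)
qed

lemma Gt_eq: "Gt x = (1 / real n) *\<^sub>R (\<Sum>i<n. v i x)"
proof -
  have "((\<lambda>y. (1 / real n) * (\<Sum>i<n. f i (T i y))) has_derivative (\<lambda>h. h \<bullet> Gt x)) (at x)"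
    using Gt unfolding gderiv_def T_def by blast
  from has_derivative_unique[OF this ft_deriv]
  have "(\<lambda>h. h \<bullet> Gt x) = (\<lambda>h. h \<bullet> ((1 / real n) *\<^sub>R (\<Sum>i<n. v i x)))" .
  hence "\<And>h. h \<bullet> (Gt x - (1 / real n) *\<^sub>R (\<Sum>i<n. v i x)) = 0"
    by (metis inner_diff_right right_minus_eq)
  from this[of "Gt x - (1 / real n) *\<^sub>R (\<Sum>i<n. v i x)"] show ?thesis by simp
qed

lemma ft_descent: "ft y \<le> ft x + Gt x \<bullet> (y - x) + La / 2 * (norm (y - x))\<^sup>2"
proof -
  have each: "f i (T i y) \<le> f i (T i x) + v i x \<bullet> (y - x) + ((\<alpha> i)\<^sup>2 * L i) / 2 * (norm (y - x))\<^sup>2"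
    if i: "i < n" for i
  proof -
    have eq: "T i y - T i x = \<alpha> i *\<^sub>R (y - x)" unfolding T_def by (simp add: algebra_simps)
    have "f i (T i y) \<le> f i (T i x) + g i (T i x) \<bullet> (T i y - T i x) + L i / 2 * (norm (T i y - T i x))\<^sup>2"
      using smooth i L_smooth_descent by blast
    hence "f i (T i y) \<le> f i (T i x) + g i (T i x) \<bullet> (\<alpha> i *\<^sub>R (y - x)) + L i / 2 * (norm (\<alpha> i *\<^sub>R (y - x)))\<^sup>2"
      unfolding eq .
    thus ?thesis
      by (simp add: v_def power_mult_distrib inner_commute mult_ac)
  qed
  have "(\<Sum>i<n. f i (T i y)) \<le> (\<Sum>i<n. f i (T i x) + v i x \<bullet> (y - x) + ((\<alpha> i)\<^sup>2 * L i) / 2 * (norm (y - x))\<^sup>2)"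
    by (rule sum_mono) (use each in auto)
  also have "\<dots> = (\<Sum>i<n. f i (T i x)) + (\<Sum>i<n. v i x) \<bullet> (y - x) + (\<Sum>i<n. (\<alpha> i)\<^sup>2 * L i) / 2 * (norm (y - x))\<^sup>2"
    by (simp add: sum.distrib inner_sum_left sum_divide_distrib sum_distrib_right)
  finally have "(1 / real n) * (\<Sum>i<n. f i (T i y)) \<le> (1 / real n) * ((\<Sum>i<n. f i (T i x)) + (\<Sum>i<n. v i x) \<bullet> (y - x) + (\<Sum>i<n. (\<alpha> i)\<^sup>2 * L i) / 2 * (norm (y - x))\<^sup>2)"
    using npos by (intro mult_left_mono) auto
  thus ?thesis unfolding ft_def Gt_eq La_def by (simp add: algebra_simps)
qed

lemma del_nonneg: "0 \<le> del x"
proof -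
  have "(\<Sum>i<n. fs i) \<le> (\<Sum>i<n. f i (T i x))" using fmin by (intro sum_mono) auto
  thus ?thesis unfolding del_def ft_def fstar_def using npos by (simp add: divide_right_mono)
qed

lemma var_bound: "(\<Sum>i<n. om i * (norm (v i x))\<^sup>2) \<le> 2 * mx * real n * del x"
proof -
  have "om i * (norm (v i x))\<^sup>2 \<le> 2 * mx * (f i (T i x) - fs i)" if i: "i < n" for i
  proof -
    have "(norm (g i (T i x)))\<^sup>2 \<le> 2 * L i * (f i (T i x) - fs i)"
      using L_smooth_grad_bound smooth fmin L_nonneg i by blast
    moreover have "om i * (norm (v i x))\<^sup>2 = (om i * (\<alpha> i)\<^sup>2) * (norm (g i (T i x)))\<^sup>2"
      by (simp add: v_def power_mult_distrib)
    moreover have "0 \<le> om i * (\<alpha> i)\<^sup>2" using om i by simp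
    ultimately have "om i * (norm (v i x))\<^sup>2 \<le> om i * (\<alpha> i)\<^sup>2 * (2 * L i * (f i (T i x) - fs i))"
      by (metis mult_left_mono)
    also have "\<dots> = 2 * (L i * om i * (\<alpha> i)\<^sup>2) * (f i (T i x) - fs i)" by simp
    also have "\<dots> \<le> 2 * mx * (f i (T i x) - fs i)"
      using mx_ge[OF i] fmin i by (intro mult_right_mono) auto
    finally show ?thesis .
  qed
  hence "(\<Sum>i<n. om i * (norm (v i x))\<^sup>2) \<le> (\<Sum>i<n. 2 * mx * (f i (T i x) - fs i))"
    by (intro sum_mono) auto
  also have "\<dots> = 2 * mx * real n * del x"
    unfolding del_def ft_def fstar_def using npos
    by (simp add: sum_distrib_left[symmetric] sum_distrib_right[symmetric] sum_subtractf algebra_simps)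
  finally show ?thesis .
qed

end


lemma sq_expand:
  fixes a :: "'v::real_inner"
  shows "(norm (a + r *\<^sub>R (\<Sum>i\<in>I. e i)))\<^sup>2 = (norm a)\<^sup>2 + 2 * r * (\<Sum>i\<in>I. a \<bullet> e i) + r\<^sup>2 * (\<Sum>i\<in>I. \<Sum>j\<in>I. e i \<bullet> e j)"
proof -
  have "(norm (a + r *\<^sub>R sum e I))\<^sup>2 = (a + r *\<^sub>R sum e I) \<bullet> (a + r *\<^sub>R sum e I)"
    by (simp add: power2_norm_eq_inner)
  also have "\<dots> = a \<bullet> a + 2 * r * (a \<bullet> sum e I) + r\<^sup>2 * (sum e I \<bullet> sum e I)"
    by (simp add: inner_add_left inner_add_right inner_commute power2_eq_square algebra_simps)
  also have "\<dots> = (norm a)\<^sup>2 + 2 * r * (\<Sum>i\<in>I. a \<bullet> e i) + r\<^sup>2 * (\<Sum>i\<in>I. \<Sum>j\<in>I. e i \<bullet> e j)"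
    apply (simp add: inner_sum_left inner_sum_right power2_norm_eq_inner)
    by (rule disjI2, rule sum.swap)
  finally show ?thesis .
qed

context setting begin

lemma xi_meas: "i < n \<Longrightarrow> \<xi> i t \<in> measurable M S"
  using indep unfolding indep_vars_def by auto

lemma Q_comp:
  assumes i: "i < n" and A: "A \<in> measurable N S" and B: "B \<in> borel_measurable N"
  shows "(\<lambda>w. Q i t (A w) (B w)) \<in> borel_measurable N"
proof -
  have "(\<lambda>w. (\<lambda>(s, x). Q i t s x) (A w, B w)) \<in> borel_measurable N"
    by (rule measurable_compose[OF measurable_Pair[OF A B]]) (use Qmeas i in auto)
  thus ?thesis by simp
qed

lemma indep_pair:
  assumes i: "i < n" and j: "j < n" and ij: "i \<noteq> j"
  shows "indep_var S (\<xi> i t) S (\<xi> j t)"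
proof -
  have "indep_var (PiM {(i,t)} (\<lambda>_. S)) (\<lambda>w. restrict (\<lambda>p. (\<lambda>(i, t). \<xi> i t) p w) {(i,t)})
                  (PiM {(j,t)} (\<lambda>_. S)) (\<lambda>w. restrict (\<lambda>p. (\<lambda>(i, t). \<xi> i t) p w) {(j,t)})"
    by (rule indep_var_restrict[OF indep]) (use i j ij in auto)
  from indep_var_compose[OF this measurable_component_singleton measurable_component_singleton]
  have "indep_var S ((\<lambda>z. z (i,t)) \<circ> (\<lambda>w. restrict (\<lambda>p. (\<lambda>(i, t). \<xi> i t) p w) {(i,t)}))
                  S ((\<lambda>z. z (j,t)) \<circ> (\<lambda>w. restrict (\<lambda>p. (\<lambda>(i, t). \<xi> i t) p w) {(j,t)}))"
    by auto
  moreover have "(\<lambda>z. z (i,t)) \<circ> (\<lambda>w. restrict (\<lambda>p. (\<lambda>(i, t). \<xi> i t) p w) {(i,t)}) = \<xi> i t"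
    by (auto simp: fun_eq_iff)
  moreover have "(\<lambda>z. z (j,t)) \<circ> (\<lambda>w. restrict (\<lambda>p. (\<lambda>(i, t). \<xi> i t) p w) {(j,t)}) = \<xi> j t"
    by (auto simp: fun_eq_iff)
  ultimately show ?thesis by simp
qed

end


context setting begin

lemma step_exp:
  "(\<integral>\<^sup>+ w. ennreal (del (x - \<gamma> *\<^sub>R ((1 / real n) *\<^sub>R (\<Sum>i<n. Q i t (\<xi> i t w) (v i x))))
      + \<gamma> / 2 * (norm (Gt x))\<^sup>2) \<partial>M) \<le> ennreal ((1 + b) * del x)"
proof -
  define c where "c i w = Q i t (\<xi> i t w) (v i x)" for i w
  define e where "e i w = c i w - v i x" for i w
  have c_meas: "c i \<in> borel_measurable M" if i: "i < n" for i
    unfolding c_def by (rule Q_comp[OF i xi_meas[OF i]]) simp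
  have cB: "integrable M (c i) \<and> (\<integral>w. c i w \<partial>M) = v i x \<and>
      (\<integral>\<^sup>+ w. ennreal ((norm (c i w - v i x))\<^sup>2) \<partial>M) \<le> ennreal (om i * (norm (v i x))\<^sup>2)"
    if i: "i < n" for i
    using QB i unfolding in_B_def c_def by blast
  have e_meas: "e i \<in> borel_measurable M" if i: "i < n" for i
    unfolding e_def using c_meas[OF i] by measurable
  have e_int: "integrable M (e i)" if i: "i < n" for i
    unfolding e_def using cB[OF i] by auto
  have e_I: "(\<integral>w. e i w \<partial>M) = 0" if i: "i < n" for i
    unfolding e_def using cB[OF i] by (simp add: prob_space)
  have e_nn: "(\<integral>\<^sup>+ w. ennreal ((norm (e i w))\<^sup>2) \<partial>M) \<le> ennreal (om i * (norm (v i x))\<^sup>2)" if i: "i < n" for i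
    unfolding e_def using cB[OF i] by auto
  have e2_int: "integrable M (\<lambda>w. (norm (e i w))\<^sup>2)" if i: "i < n" for i
  proof (rule integrableI_bounded)
    show "(\<lambda>w. (norm (e i w))\<^sup>2) \<in> borel_measurable M" using e_meas[OF i] by measurable
    have "(\<integral>\<^sup>+ w. ennreal (norm ((norm (e i w))\<^sup>2)) \<partial>M) = (\<integral>\<^sup>+ w. ennreal ((norm (e i w))\<^sup>2) \<partial>M)" by simp
    also have "\<dots> \<le> ennreal (om i * (norm (v i x))\<^sup>2)" by (rule e_nn[OF i])
    also have "\<dots> < \<infinity>" by simp
    finally show "(\<integral>\<^sup>+ w. ennreal (norm ((norm (e i w))\<^sup>2)) \<partial>M) < \<infinity>" .
  qed
  have e2_I: "(\<integral>w. (norm (e i w))\<^sup>2 \<partial>M) \<le> om i * (norm (v i x))\<^sup>2" if i: "i < n" for i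
  proof -
    have "ennreal (\<integral>w. (norm (e i w))\<^sup>2 \<partial>M) = (\<integral>\<^sup>+ w. ennreal ((norm (e i w))\<^sup>2) \<partial>M)"
      by (rule nn_integral_eq_integral[symmetric]) (use e2_int[OF i] in auto)
    also have "\<dots> \<le> ennreal (om i * (norm (v i x))\<^sup>2)" by (rule e_nn[OF i])
    finally show ?thesis using om i by (simp add: ennreal_le_iff)
  qed
  have cross: "integrable M (\<lambda>w. e i w \<bullet> e j w) \<and> (\<integral>w. e i w \<bullet> e j w \<partial>M) = 0"
    if i: "i < n" and j: "j < n" and ij: "i \<noteq> j" for i j
  proof -
    have comp: "integrable M (\<lambda>w. e i w $ k * e j w $ k) \<and> (\<integral>w. e i w $ k * e j w $ k \<partial>M) = 0" for k
    proof -
      have m1: "(\<lambda>s. (Q i t s (v i x) - v i x) $ k) \<in> borel_measurable S"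
      proof (rule borel_measurable_continuous_on[where f="\<lambda>z. z $ k"])
        show "continuous_on UNIV (\<lambda>z::real^'d. z $ k)" by (intro linear_continuous_on bounded_linear_vec_nth)
        have "(\<lambda>s. Q i t s (v i x)) \<in> borel_measurable S"
          using Q_comp[OF i measurable_ident_sets[OF refl] measurable_const] by simp
        thus "(\<lambda>s. Q i t s (v i x) - v i x) \<in> borel_measurable S" by measurable
      qed
      have m2: "(\<lambda>s. (Q j t s (v j x) - v j x) $ k) \<in> borel_measurable S"
      proof (rule borel_measurable_continuous_on[where f="\<lambda>z. z $ k"])
        show "continuous_on UNIV (\<lambda>z::real^'d. z $ k)" by (intro linear_continuous_on bounded_linear_vec_nth)
        have "(\<lambda>s. Q j t s (v j x)) \<in> borel_measurable S"
          using Q_comp[OF j measurable_ident_sets[OF refl] measurable_const] by simp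
        thus "(\<lambda>s. Q j t s (v j x) - v j x) \<in> borel_measurable S" by measurable
      qed
      from indep_var_compose[OF indep_pair[OF i j ij] m1 m2]
      have ind: "indep_var borel (\<lambda>w. e i w $ k) borel (\<lambda>w. e j w $ k)"
        by (simp add: o_def e_def c_def)
      have ii: "integrable M (\<lambda>w. e i w $ k)"
        using integrable_bounded_linear[OF bounded_linear_vec_nth e_int[OF i]] .
      have ij': "integrable M (\<lambda>w. e j w $ k)"
        using integrable_bounded_linear[OF bounded_linear_vec_nth e_int[OF j]] .
      have z: "(\<integral>w. e i w $ k \<partial>M) = 0"
        using integral_bounded_linear[OF bounded_linear_vec_nth e_int[OF i]] e_I[OF i] by simp
      show ?thesis using indep_var_lebesgue_integral[OF ind ii ij'] indep_var_integrable[OF ind ii ij'] z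
        by simp
    qed
    have eq: "(\<lambda>w. e i w \<bullet> e j w) = (\<lambda>w. \<Sum>k\<in>UNIV. e i w $ k * e j w $ k)"
      by (simp add: inner_vec_def)
    show ?thesis unfolding eq using comp by (simp add: Bochner_Integration.integral_sum)
  qed
  have ge_int: "integrable M (\<lambda>w. Gt x \<bullet> e i w) \<and> (\<integral>w. Gt x \<bullet> e i w \<partial>M) = 0" if i: "i < n" for i
    using e_int[OF i] e_I[OF i] by simp
  have ee_int: "integrable M (\<lambda>w. e i w \<bullet> e j w)" if i: "i < n" and j: "j < n" for i j
    using cross[OF i j] e2_int[OF i] by (cases "i = j") (auto simp: power2_norm_eq_inner)
  define R where "R w = del x - \<gamma> * ((norm (Gt x))\<^sup>2 + (1 / real n) * (\<Sum>i<n. Gt x \<bullet> e i w))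
     + La * \<gamma>\<^sup>2 / 2 * ((norm (Gt x))\<^sup>2 + 2 * (1 / real n) * (\<Sum>i<n. Gt x \<bullet> e i w)
         + (1 / real n)\<^sup>2 * (\<Sum>i<n. \<Sum>j<n. e i w \<bullet> e j w))" for w
  define G where "G w = (1 / real n) *\<^sub>R (\<Sum>i<n. c i w)" for w
  have G_eq: "G w = Gt x + (1 / real n) *\<^sub>R (\<Sum>i<n. e i w)" for w
    unfolding G_def Gt_eq e_def by (simp add: sum_subtractf scaleR_diff_right)
  have pw: "del (x - \<gamma> *\<^sub>R G w) \<le> R w" for w
  proof -
    have "ft (x - \<gamma> *\<^sub>R G w) \<le> ft x + Gt x \<bullet> ((x - \<gamma> *\<^sub>R G w) - x) + La / 2 * (norm ((x - \<gamma> *\<^sub>R G w) - x))\<^sup>2"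
      by (rule ft_descent)
    also have "\<dots> = ft x - \<gamma> * (Gt x \<bullet> G w) + La * \<gamma>\<^sup>2 / 2 * (norm (G w))\<^sup>2"
      by (simp add: power_mult_distrib)
    also have "Gt x \<bullet> G w = (norm (Gt x))\<^sup>2 + (1 / real n) * (\<Sum>i<n. Gt x \<bullet> e i w)"
      unfolding G_eq by (simp add: inner_add_right inner_sum_right power2_norm_eq_inner)
    also have "(norm (G w))\<^sup>2 = (norm (Gt x))\<^sup>2 + 2 * (1 / real n) * (\<Sum>i<n. Gt x \<bullet> e i w)
         + (1 / real n)\<^sup>2 * (\<Sum>i<n. \<Sum>j<n. e i w \<bullet> e j w)"
      unfolding G_eq by (rule sq_expand)
    finally show ?thesis unfolding del_def R_def by simp
  qed
  have s1: "integrable M (\<lambda>w. \<Sum>i<n. Gt x \<bullet> e i w)"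
    by (rule Bochner_Integration.integrable_sum) (use ge_int in auto)
  have s2: "integrable M (\<lambda>w. \<Sum>i<n. \<Sum>j<n. e i w \<bullet> e j w)"
    by (intro Bochner_Integration.integrable_sum) (use ee_int in auto)
  have R_int: "integrable M R"
    unfolding R_def by (intro Bochner_Integration.integrable_add Bochner_Integration.integrable_diff Bochner_Integration.integrable_mult_right integrable_const s1 s2)
  define S1 where "S1 w = (\<Sum>i<n. Gt x \<bullet> e i w)" for w
  define S2 where "S2 w = (\<Sum>i<n. \<Sum>j<n. e i w \<bullet> e j w)" for w
  define A where "A = del x - \<gamma> * (norm (Gt x))\<^sup>2 + La * \<gamma>\<^sup>2 / 2 * (norm (Gt x))\<^sup>2"
  define B where "B = - \<gamma> / real n + La * \<gamma>\<^sup>2 / 2 * (2 / real n)"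
  define C where "C = La * \<gamma>\<^sup>2 / 2 * (1 / real n)\<^sup>2"
  have R_eq: "R = (\<lambda>w. A + B * S1 w + C * S2 w)"
    unfolding R_def A_def B_def C_def S1_def S2_def by (auto simp: fun_eq_iff algebra_simps)
  have S1_I: "(\<integral>w. S1 w \<partial>M) = 0"
    unfolding S1_def using ge_int by (simp add: Bochner_Integration.integral_sum)
  have S2_I: "(\<integral>w. S2 w \<partial>M) = (\<Sum>i<n. \<Sum>j<n. \<integral>w. e i w \<bullet> e j w \<partial>M)"
  proof -
    have "(\<integral>w. S2 w \<partial>M) = (\<Sum>i<n. \<integral>w. (\<Sum>j<n. e i w \<bullet> e j w) \<partial>M)"
      unfolding S2_def by (rule Bochner_Integration.integral_sum) (use ee_int in auto)
    also have "\<dots> = (\<Sum>i<n. \<Sum>j<n. \<integral>w. e i w \<bullet> e j w \<partial>M)"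
      by (intro sum.cong refl Bochner_Integration.integral_sum) (use ee_int in auto)
    finally show ?thesis .
  qed
  have R_I: "(\<integral>w. R w \<partial>M) = del x - \<gamma> * (norm (Gt x))\<^sup>2
     + La * \<gamma>\<^sup>2 / 2 * ((norm (Gt x))\<^sup>2 + (1 / real n)\<^sup>2 * (\<Sum>i<n. \<Sum>j<n. \<integral>w. e i w \<bullet> e j w \<partial>M))"
  proof -
    have i1: "integrable M S1" unfolding S1_def by (rule s1)
    have i2: "integrable M S2" unfolding S2_def by (rule s2)
    have "(\<integral>w. R w \<partial>M) = A + B * (\<integral>w. S1 w \<partial>M) + C * (\<integral>w. S2 w \<partial>M)"
      unfolding R_eq using i1 i2 by (simp add: prob_space)
    thus ?thesis unfolding S1_I S2_I A_def C_def by (simp add: algebra_simps)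
  qed
  have dd: "(\<Sum>i<n. \<Sum>j<n. \<integral>w. e i w \<bullet> e j w \<partial>M) = (\<Sum>i<n. \<integral>w. (norm (e i w))\<^sup>2 \<partial>M)"
  proof (rule sum.cong[OF refl])
    fix i assume "i \<in> {..<n}"
    hence i: "i < n" by simp
    have "(\<Sum>j<n. \<integral>w. e i w \<bullet> e j w \<partial>M) = (\<Sum>j<n. if j = i then \<integral>w. (norm (e i w))\<^sup>2 \<partial>M else 0)"
      using cross[OF i] by (intro sum.cong) (auto simp: power2_norm_eq_inner)
    also have "\<dots> = \<integral>w. (norm (e i w))\<^sup>2 \<partial>M" using i by simp
    finally show "(\<Sum>j<n. \<integral>w. e i w \<bullet> e j w \<partial>M) = \<integral>w. (norm (e i w))\<^sup>2 \<partial>M" .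
  qed
  have Vb: "(\<Sum>i<n. \<integral>w. (norm (e i w))\<^sup>2 \<partial>M) \<le> 2 * mx * real n * del x"
  proof -
    have "(\<Sum>i<n. \<integral>w. (norm (e i w))\<^sup>2 \<partial>M) \<le> (\<Sum>i<n. om i * (norm (v i x))\<^sup>2)"
      by (rule sum_mono) (use e2_I in auto)
    thus ?thesis using var_bound[of x] by linarith
  qed
  have R_le: "(\<integral>w. R w \<partial>M) + \<gamma> / 2 * (norm (Gt x))\<^sup>2 \<le> (1 + b) * del x"
  proof -
    define V where "V = (\<Sum>i<n. \<integral>w. (norm (e i w))\<^sup>2 \<partial>M)"
    define N2 where "N2 = (norm (Gt x))\<^sup>2"
    have N2: "0 \<le> N2" unfolding N2_def by simp
    have LG: "La * \<gamma>\<^sup>2 \<le> \<gamma>" using La_gamma gamma(1) by (simp add: power2_eq_square mult_le_cancel_right1)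
    have c1: "La * \<gamma>\<^sup>2 / 2 * N2 \<le> \<gamma> / 2 * N2" using LG N2 by (intro mult_right_mono) auto
    have c2: "La * \<gamma>\<^sup>2 / 2 * ((1 / real n)\<^sup>2 * V) \<le> La * \<gamma>\<^sup>2 / 2 * ((1 / real n)\<^sup>2 * (2 * mx * real n * del x))"
      using Vb La_nonneg unfolding V_def by (intro mult_left_mono) auto
    have c3: "La * \<gamma>\<^sup>2 / 2 * ((1 / real n)\<^sup>2 * (2 * mx * real n * del x)) = b * del x"
      unfolding b_def using npos by (simp add: power2_eq_square field_simps)
    have "(\<integral>w. R w \<partial>M) + \<gamma> / 2 * N2 = del x - \<gamma> * N2 + La * \<gamma>\<^sup>2 / 2 * N2 + La * \<gamma>\<^sup>2 / 2 * ((1 / real n)\<^sup>2 * V) + \<gamma> / 2 * N2"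
      unfolding R_I dd V_def N2_def by (simp add: algebra_simps)
    also have "\<dots> \<le> (1 + b) * del x"
    proof -
      have "(1 + b) * del x = del x + b * del x" by (simp add: algebra_simps)
      thus ?thesis using c1 c2 c3 by linarith
    qed
    finally show ?thesis unfolding N2_def .
  qed
  have "(\<integral>\<^sup>+ w. ennreal (del (x - \<gamma> *\<^sub>R ((1 / real n) *\<^sub>R (\<Sum>i<n. Q i t (\<xi> i t w) (v i x))))
      + \<gamma> / 2 * (norm (Gt x))\<^sup>2) \<partial>M) \<le> (\<integral>\<^sup>+ w. ennreal (R w + \<gamma> / 2 * (norm (Gt x))\<^sup>2) \<partial>M)"
    using pw unfolding G_def c_def by (intro nn_integral_mono ennreal_leI) auto
  also have "\<dots> = ennreal (\<integral>w. R w + \<gamma> / 2 * (norm (Gt x))\<^sup>2 \<partial>M)"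
  proof (rule nn_integral_eq_integral)
    show "integrable M (\<lambda>w. R w + \<gamma> / 2 * (norm (Gt x))\<^sup>2)" using R_int by auto
    have "0 \<le> R w + \<gamma> / 2 * (norm (Gt x))\<^sup>2" for w
      using pw[of w] del_nonneg[of "x - \<gamma> *\<^sub>R G w"] gamma(1) by (smt (verit) zero_le_divide_iff zero_le_mult_iff zero_le_power2)
    thus "AE w in M. 0 \<le> R w + \<gamma> / 2 * (norm (Gt x))\<^sup>2" by simp
  qed
  also have "(\<integral>w. R w + \<gamma> / 2 * (norm (Gt x))\<^sup>2 \<partial>M) = (\<integral>w. R w \<partial>M) + \<gamma> / 2 * (norm (Gt x))\<^sup>2"
    using R_int by (simp add: prob_space)
  also have "ennreal \<dots> \<le> ennreal ((1 + b) * del x)" using R_le by (rule ennreal_leI)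
  finally show ?thesis .
qed

end


context setting begin

primrec F :: "nat \<Rightarrow> (nat \<times> nat \<Rightarrow> 's) \<Rightarrow> real^'d" where
  "F 0 z = x0"
| "F (Suc t) z = F t z - \<gamma> *\<^sub>R ((1 / real n) *\<^sub>R (\<Sum>i<n. Q i t (z (i, t)) (v i (F t z))))"

lemma step_meas:
  assumes Fm: "Fm \<in> borel_measurable N" and Z: "\<And>i. i < n \<Longrightarrow> Z i \<in> measurable N S"
  shows "(\<lambda>w. Fm w - \<gamma> *\<^sub>R ((1 / real n) *\<^sub>R (\<Sum>i<n. Q i t (Z i w) (v i (Fm w))))) \<in> borel_measurable N"
proof -
  have "(\<lambda>w. Q i t (Z i w) (v i (Fm w))) \<in> borel_measurable N" if i: "i < n" for i
    by (rule Q_comp[OF i Z[OF i] borel_measurable_continuous_on[OF v_cont[OF i] Fm]])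
  hence "(\<lambda>w. \<Sum>i<n. Q i t (Z i w) (v i (Fm w))) \<in> borel_measurable N"
    by (intro borel_measurable_sum) auto
  thus ?thesis using Fm by measurable
qed

lemma F_X: "X t w = F t (\<lambda>p. \<xi> (fst p) (snd p) w)"
  by (induction t) (simp_all add: X0 Xstep v_def T_def)

lemma F_local: "(\<forall>i<n. \<forall>s<t. z (i, s) = z' (i, s)) \<Longrightarrow> F t z = F t z'"
proof (induction t)
  case (Suc t)
  hence "F t z = F t z'" by auto
  moreover have "\<forall>i<n. z (i, t) = z' (i, t)" using Suc.prems by auto
  ultimately show ?case by simp
qed simp

lemma F_meas: "{..<n} \<times> {..<t} \<subseteq> K \<Longrightarrow> F t \<in> borel_measurable (PiM K (\<lambda>_. S))"
proof (induction t)
  case 0 thus ?case by simp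
next
  case (Suc t)
  have sub: "{..<n} \<times> {..<t} \<subseteq> K" using Suc.prems by (force simp: subset_iff)
  have Fm: "F t \<in> borel_measurable (PiM K (\<lambda>_. S))" by (rule Suc.IH[OF sub])
  have Z: "(\<lambda>z. z (i, t)) \<in> measurable (PiM K (\<lambda>_. S)) S" if i: "i < n" for i
    using Suc.prems i by (intro measurable_component_singleton) auto
  show ?case using step_meas[OF Fm Z] by (simp add: F.simps(2)[abs_def])
qed

definition "Yv t w = restrict (\<lambda>p. (\<lambda>(i, t). \<xi> i t) p w) ({..<n} \<times> {..<t})"
definition "Wv t w = restrict (\<lambda>p. (\<lambda>(i, t). \<xi> i t) p w) ({..<n} \<times> {t})"

lemma Yv_meas: "Yv t \<in> measurable M (PiM ({..<n} \<times> {..<t}) (\<lambda>_. S))"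
  unfolding Yv_def by (rule measurable_restrict) (auto intro: xi_meas)

lemma Wv_meas: "Wv t \<in> measurable M (PiM ({..<n} \<times> {t}) (\<lambda>_. S))"
  unfolding Wv_def by (rule measurable_restrict) (auto intro: xi_meas)

lemma X_Yv: "X t w = F t (Yv t w)"
  unfolding F_X Yv_def by (rule F_local) auto

lemma X_meas: "X t \<in> borel_measurable M"
proof -
  have "(\<lambda>w. F t (Yv t w)) \<in> borel_measurable M"
    by (rule measurable_compose[OF Yv_meas F_meas]) simp
  thus ?thesis unfolding X_Yv[abs_def] .
qed

lemma X_Suc_YW: "X (Suc t) w = F t (Yv t w) - \<gamma> *\<^sub>R ((1 / real n) *\<^sub>R (\<Sum>i<n. Q i t (Wv t w (i, t)) (v i (F t (Yv t w)))))"
proof -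
  have "X (Suc t) w = X t w - \<gamma> *\<^sub>R ((1 / real n) *\<^sub>R (\<Sum>i<n. Q i t (\<xi> i t w) (v i (X t w))))"
    using Xstep by (simp add: v_def T_def)
  also have "(\<Sum>i<n. Q i t (\<xi> i t w) (v i (X t w))) = (\<Sum>i<n. Q i t (Wv t w (i, t)) (v i (X t w)))"
    by (rule sum.cong) (auto simp: Wv_def)
  finally show ?thesis unfolding X_Yv .
qed

lemma ind_YW: "indep_var (PiM ({..<n} \<times> {..<t}) (\<lambda>_. S)) (Yv t) (PiM ({..<n} \<times> {t}) (\<lambda>_. S)) (Wv t)"
  unfolding Yv_def Wv_def by (rule indep_var_restrict[OF indep]) auto

lemma Gt_cont: "continuous_on UNIV Gt"
proof -
  have "continuous_on UNIV (\<lambda>x. (1 / real n) *\<^sub>R (\<Sum>i<n. v i x))"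
    using v_cont by (intro continuous_intros) auto
  thus ?thesis unfolding Gt_eq[abs_def] .
qed

lemma del_cont: "continuous_on UNIV del"
  unfolding del_def[abs_def] using ft_cont by (intro continuous_intros)

end


context setting begin

lemma recur:
  "(\<integral>\<^sup>+ w. ennreal (del (X (Suc t) w)) \<partial>M) + ennreal (\<gamma> / 2) * (\<integral>\<^sup>+ w. ennreal ((norm (Gt (X t w)))\<^sup>2) \<partial>M)
    \<le> ennreal (1 + b) * (\<integral>\<^sup>+ w. ennreal (del (X t w)) \<partial>M)"
proof -
  define PK where "PK = PiM ({..<n} \<times> {..<t}) (\<lambda>_. S)"
  define PL where "PL = PiM ({..<n} \<times> {t}) (\<lambda>_. S)"
  define PY where "PY = distr M PK (Yv t)"
  define PW where "PW = distr M PL (Wv t)"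
  define stp where "stp p = F t (fst p) - \<gamma> *\<^sub>R ((1 / real n) *\<^sub>R (\<Sum>i<n. Q i t (snd p (i, t)) (v i (F t (fst p)))))" for p
  define H where "H p = ennreal (del (stp p) + \<gamma> / 2 * (norm (Gt (F t (fst p))))\<^sup>2)" for p
  have Ym: "Yv t \<in> measurable M PK" unfolding PK_def by (rule Yv_meas)
  have Wm: "Wv t \<in> measurable M PL" unfolding PL_def by (rule Wv_meas)
  have Ftm: "(\<lambda>p. F t (fst p)) \<in> borel_measurable (PK \<Otimes>\<^sub>M PL)"
    by (rule measurable_compose[OF measurable_fst]) (unfold PK_def, rule F_meas, simp)
  have Zm: "(\<lambda>p. snd p (i, t)) \<in> measurable (PK \<Otimes>\<^sub>M PL) S" if i: "i < n" for i
    by (rule measurable_compose[OF measurable_snd]) (unfold PL_def, rule measurable_component_singleton, use i in auto)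
  have stpm: "stp \<in> borel_measurable (PK \<Otimes>\<^sub>M PL)"
    unfolding stp_def by (rule step_meas[OF Ftm Zm])
  have Hm: "H \<in> borel_measurable (PK \<Otimes>\<^sub>M PL)"
  proof -
    have a: "(\<lambda>p. del (stp p)) \<in> borel_measurable (PK \<Otimes>\<^sub>M PL)"
      by (rule borel_measurable_continuous_on[OF del_cont stpm])
    have c: "(\<lambda>p. Gt (F t (fst p))) \<in> borel_measurable (PK \<Otimes>\<^sub>M PL)"
      by (rule borel_measurable_continuous_on[OF Gt_cont Ftm])
    show ?thesis unfolding H_def using a c by measurable
  qed
  have PWprob: "prob_space PW" unfolding PW_def by (rule prob_space_distr[OF Wm])
  interpret PW: prob_space PW by (rule PWprob)
  have distr_eq: "PY \<Otimes>\<^sub>M PW = distr M (PK \<Otimes>\<^sub>M PL) (\<lambda>w. (Yv t w, Wv t w))"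
    using ind_YW[of t] unfolding indep_var_distribution_eq PY_def PW_def PK_def PL_def by simp
  have HmYW: "H \<in> borel_measurable (PY \<Otimes>\<^sub>M PW)"
    using Hm unfolding distr_eq by simp
  have joint: "(\<integral>\<^sup>+ w. H (Yv t w, Wv t w) \<partial>M) = (\<integral>\<^sup>+ y. \<integral>\<^sup>+ z. H (y, z) \<partial>PW \<partial>PY)"
  proof -
    have "(\<integral>\<^sup>+ w. H (Yv t w, Wv t w) \<partial>M) = integral\<^sup>N (distr M (PK \<Otimes>\<^sub>M PL) (\<lambda>w. (Yv t w, Wv t w))) H"
    proof -
      have mp: "(\<lambda>w. (Yv t w, Wv t w)) \<in> measurable M (PK \<Otimes>\<^sub>M PL)" using Ym Wm by (rule measurable_Pair)
      have Hm': "H \<in> borel_measurable (distr M (PK \<Otimes>\<^sub>M PL) (\<lambda>w. (Yv t w, Wv t w)))" using Hm by simp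
      show ?thesis by (rule nn_integral_distr[OF mp Hm', symmetric])
    qed
    also have "\<dots> = integral\<^sup>N (PY \<Otimes>\<^sub>M PW) H" unfolding distr_eq ..
    also have "\<dots> = (\<integral>\<^sup>+ y. \<integral>\<^sup>+ z. H (y, z) \<partial>PW \<partial>PY)"
      by (rule PW.nn_integral_fst[symmetric, OF HmYW])
    finally show ?thesis .
  qed
  have inner: "(\<integral>\<^sup>+ z. H (y, z) \<partial>PW) \<le> ennreal ((1 + b) * del (F t y))" if y: "y \<in> space PY" for y
  proof -
    have yK: "y \<in> space PK" using y unfolding PY_def by simp
    have "(\<integral>\<^sup>+ z. H (y, z) \<partial>PW) = (\<integral>\<^sup>+ w. H (y, Wv t w) \<partial>M)"
      unfolding PW_def
    proof (rule nn_integral_distr[OF Wm])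
      have "(\<lambda>z. H (y, z)) \<in> borel_measurable PL"
        by (rule measurable_compose[OF measurable_Pair1'[OF yK] Hm])
      thus "(\<lambda>z. H (y, z)) \<in> borel_measurable (distr M PL (Wv t))" by simp
    qed
    also have "\<dots> = (\<integral>\<^sup>+ w. ennreal (del (F t y - \<gamma> *\<^sub>R ((1 / real n) *\<^sub>R (\<Sum>i<n. Q i t (\<xi> i t w) (v i (F t y)))))
      + \<gamma> / 2 * (norm (Gt (F t y)))\<^sup>2) \<partial>M)"
    proof (rule nn_integral_cong)
      fix w
      have "(\<Sum>i<n. Q i t (Wv t w (i, t)) (v i (F t y))) = (\<Sum>i<n. Q i t (\<xi> i t w) (v i (F t y)))"
        by (rule sum.cong) (auto simp: Wv_def)
      thus "H (y, Wv t w) = ennreal (del (F t y - \<gamma> *\<^sub>R ((1 / real n) *\<^sub>R (\<Sum>i<n. Q i t (\<xi> i t w) (v i (F t y)))))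
      + \<gamma> / 2 * (norm (Gt (F t y)))\<^sup>2)" unfolding H_def stp_def by simp
    qed
    also have "\<dots> \<le> ennreal ((1 + b) * del (F t y))" by (rule step_exp)
    finally show ?thesis .
  qed
  have lhs: "(\<integral>\<^sup>+ w. H (Yv t w, Wv t w) \<partial>M) =
    (\<integral>\<^sup>+ w. ennreal (del (X (Suc t) w)) \<partial>M) + ennreal (\<gamma> / 2) * (\<integral>\<^sup>+ w. ennreal ((norm (Gt (X t w)))\<^sup>2) \<partial>M)"
  proof -
    have "(\<integral>\<^sup>+ w. H (Yv t w, Wv t w) \<partial>M) = (\<integral>\<^sup>+ w. ennreal (del (X (Suc t) w)) + ennreal (\<gamma> / 2) * ennreal ((norm (Gt (X t w)))\<^sup>2) \<partial>M)"
    proof (rule nn_integral_cong)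
      fix w
      have "H (Yv t w, Wv t w) = ennreal (del (X (Suc t) w) + \<gamma> / 2 * (norm (Gt (X t w)))\<^sup>2)"
        unfolding H_def stp_def X_Suc_YW[of t w] X_Yv[of t w] by simp
      also have "\<dots> = ennreal (del (X (Suc t) w)) + ennreal (\<gamma> / 2) * ennreal ((norm (Gt (X t w)))\<^sup>2)"
      proof -
        have "ennreal (\<gamma> / 2 * (norm (Gt (X t w)))\<^sup>2) = ennreal (\<gamma> / 2) * ennreal ((norm (Gt (X t w)))\<^sup>2)"
          using gamma(1) by (intro ennreal_mult) auto
        moreover have "ennreal (del (X (Suc t) w) + \<gamma> / 2 * (norm (Gt (X t w)))\<^sup>2)
           = ennreal (del (X (Suc t) w)) + ennreal (\<gamma> / 2 * (norm (Gt (X t w)))\<^sup>2)"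
          using del_nonneg gamma(1) by (intro ennreal_plus) auto
        ultimately show ?thesis by simp
      qed
      finally show "H (Yv t w, Wv t w) = ennreal (del (X (Suc t) w)) + ennreal (\<gamma> / 2) * ennreal ((norm (Gt (X t w)))\<^sup>2)" .
    qed
    also have "\<dots> = (\<integral>\<^sup>+ w. ennreal (del (X (Suc t) w)) \<partial>M) + (\<integral>\<^sup>+ w. ennreal (\<gamma> / 2) * ennreal ((norm (Gt (X t w)))\<^sup>2) \<partial>M)"
    proof (rule nn_integral_add)
      show "(\<lambda>w. ennreal (del (X (Suc t) w))) \<in> borel_measurable M"
        using borel_measurable_continuous_on[OF del_cont X_meas[of "Suc t"]] by measurable
      show "(\<lambda>w. ennreal (\<gamma> / 2) * ennreal ((norm (Gt (X t w)))\<^sup>2)) \<in> borel_measurable M"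
        using borel_measurable_continuous_on[OF Gt_cont X_meas[of t]] by measurable
    qed
    also have "(\<integral>\<^sup>+ w. ennreal (\<gamma> / 2) * ennreal ((norm (Gt (X t w)))\<^sup>2) \<partial>M) = ennreal (\<gamma> / 2) * (\<integral>\<^sup>+ w. ennreal ((norm (Gt (X t w)))\<^sup>2) \<partial>M)"
      by (rule nn_integral_cmult) (use borel_measurable_continuous_on[OF Gt_cont X_meas[of t]] in measurable)
    finally show ?thesis .
  qed
  have "(\<integral>\<^sup>+ y. \<integral>\<^sup>+ z. H (y, z) \<partial>PW \<partial>PY) \<le> (\<integral>\<^sup>+ y. ennreal ((1 + b) * del (F t y)) \<partial>PY)"
    by (rule nn_integral_mono) (rule inner)
  also have "\<dots> = (\<integral>\<^sup>+ w. ennreal ((1 + b) * del (F t (Yv t w))) \<partial>M)"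
    unfolding PY_def
  proof (rule nn_integral_distr[OF Ym])
    have "F t \<in> borel_measurable PK" unfolding PK_def by (rule F_meas) simp
    hence "(\<lambda>y. ennreal ((1 + b) * del (F t y))) \<in> borel_measurable PK"
      using borel_measurable_continuous_on[OF del_cont] by measurable
    thus "(\<lambda>y. ennreal ((1 + b) * del (F t y))) \<in> borel_measurable (distr M PK (Yv t))" by simp
  qed
  also have "\<dots> = (\<integral>\<^sup>+ w. ennreal (1 + b) * ennreal (del (X t w)) \<partial>M)"
    using b_nonneg del_nonneg by (intro nn_integral_cong) (simp add: X_Yv ennreal_mult)
  also have "\<dots> = ennreal (1 + b) * (\<integral>\<^sup>+ w. ennreal (del (X t w)) \<partial>M)"
    by (rule nn_integral_cmult) (use borel_measurable_continuous_on[OF del_cont X_meas[of t]] in measurable)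
  finally show ?thesis using joint lhs by simp
qed

end


context setting begin

lemma final:
  assumes k: "k \<ge> 1"
  shows "Min ((\<lambda>t. \<integral>\<^sup>+ w. ennreal ((norm (Gt (X t w)))\<^sup>2) \<partial>M) ` {..<k}) \<le>
    ennreal (2 * (1 + 2 * La * \<gamma>\<^sup>2 * mx / real n) ^ k / (\<gamma> * real k) * del x0)"
proof -
  define D where "D t = (\<integral>\<^sup>+ w. ennreal (del (X t w)) \<partial>M)" for t
  define N where "N t = (\<integral>\<^sup>+ w. ennreal ((norm (Gt (X t w)))\<^sup>2) \<partial>M)" for t
  define m where "m = Min (N ` {..<k})"
  have mle: "m \<le> N s" if "s < k" for s
    unfolding m_def using that by (intro Min_le) auto
  have D0: "D 0 = ennreal (del x0)"
    unfolding D_def using X0 by (simp add: emeasure_space_1)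
  have claim: "t \<le> k \<Longrightarrow> D t + ennreal (\<gamma> / 2 * real t) * m \<le> ennreal ((1 + b) ^ t) * D 0" for t
  proof (induction t)
    case 0 thus ?case by simp
  next
    case (Suc t)
    hence tk: "t < k" by simp
    have IH: "D t + ennreal (\<gamma> / 2 * real t) * m \<le> ennreal ((1 + b) ^ t) * D 0" using Suc by simp
    have split: "ennreal (\<gamma> / 2 * real (Suc t)) = ennreal (\<gamma> / 2) + ennreal (\<gamma> / 2 * real t)"
    proof -
      have "\<gamma> / 2 * real (Suc t) = \<gamma> / 2 + \<gamma> / 2 * real t" by (simp add: algebra_simps)
      thus ?thesis using gamma(1) by (simp only:) (rule ennreal_plus, auto)
    qed
    have "D (Suc t) + ennreal (\<gamma> / 2 * real (Suc t)) * m
        = D (Suc t) + ennreal (\<gamma> / 2) * m + ennreal (\<gamma> / 2 * real t) * m"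
      unfolding split by (simp add: distrib_right add.assoc)
    also have "\<dots> \<le> D (Suc t) + ennreal (\<gamma> / 2) * N t + ennreal (\<gamma> / 2 * real t) * m"
      using mle[OF tk] by (intro add_mono mult_left_mono order_refl) auto
    also have "\<dots> \<le> ennreal (1 + b) * D t + ennreal (\<gamma> / 2 * real t) * m"
      using recur[of t] unfolding D_def N_def by (intro add_mono order_refl)
    also have "\<dots> \<le> ennreal (1 + b) * D t + ennreal (1 + b) * (ennreal (\<gamma> / 2 * real t) * m)"
    proof (intro add_mono order_refl)
      have "1 \<le> ennreal (1 + b)" using b_nonneg by simp
      from mult_right_mono[OF this, of "ennreal (\<gamma> / 2 * real t) * m"]
      show "ennreal (\<gamma> / 2 * real t) * m \<le> ennreal (1 + b) * (ennreal (\<gamma> / 2 * real t) * m)" by simp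
    qed
    also have "\<dots> = ennreal (1 + b) * (D t + ennreal (\<gamma> / 2 * real t) * m)"
      by (simp add: distrib_left)
    also have "\<dots> \<le> ennreal (1 + b) * (ennreal ((1 + b) ^ t) * D 0)"
      by (intro mult_left_mono IH) simp
    also have "\<dots> = ennreal ((1 + b) ^ Suc t) * D 0"
      using b_nonneg by (simp add: ennreal_mult mult.assoc)
    finally show ?case .
  qed
  have key: "ennreal (\<gamma> / 2 * real k) * m \<le> ennreal ((1 + b) ^ k * del x0)"
  proof -
    have "ennreal (\<gamma> / 2 * real k) * m \<le> D k + ennreal (\<gamma> / 2 * real k) * m"
      by (rule add_increasing) auto
    also have "\<dots> \<le> ennreal ((1 + b) ^ k) * D 0" by (rule claim) simp
    also have "\<dots> = ennreal ((1 + b) ^ k * del x0)"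
      unfolding D0 using b_nonneg del_nonneg[of x0] by (intro ennreal_mult[symmetric]) auto
    finally show ?thesis .
  qed
  define c where "c = \<gamma> / 2 * real k"
  have cpos: "c > 0" unfolding c_def using gamma(1) k by simp
  define B where "B = (1 + b) ^ k * del x0"
  have B0: "0 \<le> B" unfolding B_def using b_nonneg del_nonneg[of x0] by simp
  have mfin: "m \<noteq> \<infinity>"
  proof
    assume "m = \<infinity>"
    hence "ennreal c * m = \<infinity>" using cpos by (simp add: ennreal_mult_eq_top_iff)
    hence "\<infinity> \<le> ennreal ((1 + b) ^ k * del x0)" using key unfolding c_def by metis
    thus False using ennreal_less_top[of "(1 + b) ^ k * del x0"] by (simp add: not_le[symmetric])
  qed
  then obtain r where r: "m = ennreal r" "0 \<le> r" by (cases m) auto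
  have "ennreal (c * r) = ennreal c * ennreal r" using cpos r(2) by (intro ennreal_mult) auto
  hence "ennreal (c * r) \<le> ennreal B" using key r(1) unfolding c_def B_def by simp
  hence cr: "c * r \<le> B" using B0 by (simp add: ennreal_le_iff)
  have "r \<le> B / c" using cr cpos by (simp add: field_simps)
  also have "B / c = 2 * (1 + b) ^ k / (\<gamma> * real k) * del x0"
    unfolding B_def c_def using gamma(1) k by (simp add: field_simps)
  also have "\<dots> \<le> 2 * (1 + 2 * La * \<gamma>\<^sup>2 * mx / real n) ^ k / (\<gamma> * real k) * del x0"
  proof -
    have "b \<le> 2 * La * \<gamma>\<^sup>2 * mx / real n"
      unfolding b_def using La_nonneg mx_nonneg npos by (simp add: divide_right_mono)
    hence "(1 + b) ^ k \<le> (1 + 2 * La * \<gamma>\<^sup>2 * mx / real n) ^ k"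
      using b_nonneg by (intro power_mono) auto
    thus ?thesis using gamma(1) k del_nonneg[of x0]
      by (intro mult_right_mono divide_right_mono mult_left_mono) auto
  qed
  finally have "r \<le> 2 * (1 + 2 * La * \<gamma>\<^sup>2 * mx / real n) ^ k / (\<gamma> * real k) * del x0" .
  hence "m \<le> ennreal (2 * (1 + 2 * La * \<gamma>\<^sup>2 * mx / real n) ^ k / (\<gamma> * real k) * del x0)"
    unfolding r(1) by (rule ennreal_leI)
  moreover have "Min ((\<lambda>t. \<integral>\<^sup>+ w. ennreal ((norm (Gt (X t w)))\<^sup>2) \<partial>M) ` {..<k}) = m"
    unfolding m_def N_def ..
  ultimately show ?thesis by simp
qed

end

theorem theorem7:
  fixes n :: nat
    and f :: "nat \<Rightarrow> real ^ 'd \<Rightarrow> real"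
    and g :: "nat \<Rightarrow> real ^ 'd \<Rightarrow> real ^ 'd"
    and L :: "nat \<Rightarrow> real"
    and fs :: "nat \<Rightarrow> real"
    and xs :: "nat \<Rightarrow> real ^ 'd"
    and \<alpha> :: "nat \<Rightarrow> real"
    and om :: "nat \<Rightarrow> real"
    and Gt :: "real ^ 'd \<Rightarrow> real ^ 'd"
    and M :: "'a measure"
    and S :: "'s measure"
    and \<xi> :: "nat \<Rightarrow> nat \<Rightarrow> 'a \<Rightarrow> 's"
    and Q :: "nat \<Rightarrow> nat \<Rightarrow> 's \<Rightarrow> real ^ 'd \<Rightarrow> real ^ 'd"
    and X :: "nat \<Rightarrow> 'a \<Rightarrow> real ^ 'd"
    and x0 :: "real ^ 'd"
    and \<gamma> :: real
    and k :: nat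
  assumes n: "n \<ge> 1"
    and smooth: "\<forall>i<n. L_smooth (L i) (f i) (g i)"
    and fmin: "\<forall>i<n. (\<exists>z. f i z = fs i) \<and> (\<forall>y. fs i \<le> f i y)"
    and stat: "\<forall>i<n. g i (xs i) = 0"
    and alpha: "\<forall>i<n. 0 < \<alpha> i \<and> \<alpha> i < 1"
    and om: "\<forall>i<n. om i \<ge> 0"
    and Gt: "\<forall>x. GDERIV (\<lambda>y. (1 / real n) * (\<Sum>i<n. f i (\<alpha> i *\<^sub>R y + (1 - \<alpha> i) *\<^sub>R xs i))) x :> Gt x"
    and M: "prob_space M"
    and indep: "prob_space.indep_vars M (\<lambda>_. S) (\<lambda>(i, t). \<xi> i t) ({..<n} \<times> UNIV)"
    and Qmeas: "\<forall>i<n. \<forall>t. (\<lambda>(s, x). Q i t s x) \<in> borel_measurable (S \<Otimes>\<^sub>M borel)"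
    and QB: "\<forall>i<n. \<forall>t. in_B M (\<lambda>w. Q i t (\<xi> i t w)) (om i)"
    and X0: "\<forall>w. X 0 w = x0"
    and Xstep: "\<forall>t w. X (Suc t) w = X t w - \<gamma> *\<^sub>R ((1 / real n) *\<^sub>R
        (\<Sum>i<n. Q i t (\<xi> i t w) (\<alpha> i *\<^sub>R g i (\<alpha> i *\<^sub>R X t w + (1 - \<alpha> i) *\<^sub>R xs i))))"
    and gamma: "0 < \<gamma>" "\<gamma> * ((1 / real n) * (\<Sum>i<n. (\<alpha> i)\<^sup>2 * L i)) \<le> 1"
    and k: "k \<ge> 1"
  shows "Min ((\<lambda>t. \<integral>\<^sup>+ w. ennreal ((norm (Gt (X t w)))\<^sup>2) \<partial>M) ` {..<k}) \<le>
    ennreal (2 * (1 + 2 * ((1 / real n) * (\<Sum>i<n. (\<alpha> i)\<^sup>2 * L i)) * \<gamma>\<^sup>2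
                     * Max ((\<lambda>i. L i * om i * (\<alpha> i)\<^sup>2) ` {..<n}) / real n) ^ k
             / (\<gamma> * real k)
           * ((1 / real n) * (\<Sum>i<n. f i (\<alpha> i *\<^sub>R x0 + (1 - \<alpha> i) *\<^sub>R xs i))
              - (1 / real n) * (\<Sum>i<n. fs i)))"
proof -
  interpret setting n f g L fs xs \<alpha> om Gt M S \<xi> Q X x0 \<gamma>
    unfolding setting_def using n smooth fmin stat alpha om Gt M indep Qmeas QB X0 Xstep gamma by (intro conjI)
  from final[OF k] show ?thesis
    unfolding La_def mx_def del_def ft_def fstar_def T_def .
qed


end
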